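(* For $n\in\mathbb{Z}^+$ we have $$\begin{aligned}&t(1,4,15;n)=2N(1,4,15;2n+5)&&\text{for } n\equiv 0\pmod 4,\\ &t(1,12,15;n)=2N(1,12,15;2n+7)&&\text{for } n\equiv 2\pmod 4,\\ &t(1,15,20;n)=2N(1,15,20;2n+9)&&\text{for } n\equiv 2\pmod 4,\\ &t(3,4,45;n)=2N(3,4,45;2n+13)&&\text{for } n\equiv 2\pmod 4.\end{aligned}$$
   Context: $\mathbb{Z}^+$ is the set of positive integers. For $a,b,c\in\mathbb{Z}^+$ and nonnegative integer $n$, $N(a,b,c;n)$ denotes the number of triples $(x,y,z)\in\mathbb{Z}^3$ with $n=ax^2+by^2+cz^2$, and $t(a,b,c;n)$ denotes the number of triples $(x,y,z)\in\mathbb{Z}^3$ with $n=a\frac{x(x+1)}2+b\frac{y(y+1)}2+c\frac{z(z+1)}2$. *)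

theory Defs
  imports Main
begin

definition N :: "int \<Rightarrow> int \<Rightarrow> int \<Rightarrow> int \<Rightarrow> nat" where
  "N a b c n = card {(x::int, y::int, z::int). n = a * x^2 + b * y^2 + c * z^2}"

definition t :: "int \<Rightarrow> int \<Rightarrow> int \<Rightarrow> int \<Rightarrow> nat" where
  "t a b c n = card {(x::int, y::int, z::int).
     n = a * (x * (x + 1) div 2) + b * (y * (y + 1) div 2) + c * (z * (z + 1) div 2)}"

end

theory Submission
  imports Defs
begin



lemma odd16_cases: fixes r :: int assumes "0 \<le> r" "r < 16" "odd r"
  shows "r = 1 \<or> r = 3 \<or> r = 5 \<or> r = 7 \<or> r = 9 \<or> r = 11 \<or> r = 13 \<or> r = 15"
proof -
  obtain k where k: "r = 2*k+1" using assms(3) by (metis oddE)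
  then have "0 \<le> k" "k < 8" using assms by auto
  then have "k = 0 \<or> k = 1 \<or> k = 2 \<or> k = 3 \<or> k = 4 \<or> k = 5 \<or> k = 6 \<or> k = 7" by auto
  then show ?thesis using k by auto
qed

lemma sq_mod32: fixes u :: int shows "(u^2 + 15*w^2) mod 32 = ((u mod 16)^2 + 15*(w mod 16)^2) mod 32"
proof -
  have u: "u = 16*(u div 16) + u mod 16" by simp
  have w: "w = 16*(w div 16) + w mod 16" by simp
  define q where "q = u div 16" define r where "r = u mod 16"
  define q' where "q' = w div 16" define s where "s = w mod 16"
  have "u^2 + 15*w^2 = (16*q+r)^2 + 15*(16*q'+s)^2" using u w unfolding q_def r_def q'_def s_def by simp
  also have "\<dots> = 32*(8*q^2 + q*r + 15*(8*q'^2 + q'*s)) + (r^2 + 15*s^2)"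
    by (simp add: power2_eq_square algebra_simps)
  finally have eq: "u^2 + 15*w^2 = 32*(8*q^2 + q*r + 15*(8*q'^2 + q'*s)) + (r^2 + 15*s^2)" .
  show ?thesis unfolding eq r_def[symmetric] s_def[symmetric] by (rule mod_mult_self4)
qed

lemma K: fixes u w :: int assumes "odd u" "odd w"
  shows "(4 dvd (u-w) \<longrightarrow> ((u^2+15*w^2) mod 32 = 0 \<longleftrightarrow> (u-w) mod 16 = 8) \<and> ((u^2+15*w^2) mod 32 = 16 \<longleftrightarrow> (u-w) mod 16 = 0))
       \<and> (\<not> 4 dvd (u-w) \<longrightarrow> ((u^2+15*w^2) mod 32 = 0 \<longleftrightarrow> (u+w) mod 16 = 8) \<and> ((u^2+15*w^2) mod 32 = 16 \<longleftrightarrow> (u+w) mod 16 = 0))"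
proof -
  define r where "r = u mod 16"
  define s where "s = w mod 16"
  have e1: "(u-w) mod 16 = (r - s) mod 16" unfolding r_def s_def by (simp add: mod_diff_eq)
  have e2: "(u+w) mod 16 = (r + s) mod 16" unfolding r_def s_def by (simp add: mod_add_eq)
  have e3: "4 dvd (u-w) \<longleftrightarrow> 4 dvd (r - s)" unfolding r_def s_def by presburger
  have e4: "(u^2+15*w^2) mod 32 = (r^2+15*s^2) mod 32" unfolding r_def s_def by (rule sq_mod32)
  have "odd r" "odd s" using assms unfolding r_def s_def by presburger+
  moreover have "0 \<le> r" "r < 16" "0 \<le> s" "s < 16" unfolding r_def s_def by auto
  ultimately have R: "r = 1 \<or> r = 3 \<or> r = 5 \<or> r = 7 \<or> r = 9 \<or> r = 11 \<or> r = 13 \<or> r = 15"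
    and S: "s = 1 \<or> s = 3 \<or> s = 5 \<or> s = 7 \<or> s = 9 \<or> s = 11 \<or> s = 13 \<or> s = 15"
    using odd16_cases by blast+
  show ?thesis unfolding e1 e2 e3 e4
    using R S by (elim disjE; simp)
qed


lemma divx: fixes a b c :: int assumes "a = b * c" "b \<noteq> 0" shows "a div b = c"
  using assms by simp

lemma odd_sq: fixes v :: int assumes "odd v" shows "\<exists>j. v^2 = 8*j+1"
proof -
  obtain k where k: "v = 2*k+1" using assms by (metis oddE)
  have "even (k*(k+1))" by simp
  then obtain l where l: "k*(k+1) = 2*l" by (metis evenE)
  have "v^2 = 4*(k*(k+1)) + 1" unfolding k by (simp add: power2_eq_square algebra_simps)
  then show ?thesis using l by (intro exI[of _ l]) simp
qed

definition rho :: "int \<Rightarrow> int \<Rightarrow> int \<times> int" where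
  "rho u w = (if 4 dvd (u-w) then ((-(u+15*w)) div 8, (u-w) div 8) else ((u-15*w) div 8, (u+w) div 8))"
definition rhoi :: "int \<Rightarrow> int \<Rightarrow> int \<times> int" where
  "rhoi P W = (if 4 dvd (P-W) then ((15*W-P) div 2, (-(P+W)) div 2) else ((15*W+P) div 2, (W-P) div 2))"

lemma rho_ok: fixes u w :: int
  assumes "odd u" "odd w" "(u^2+15*w^2) mod 32 = 0"
  shows "odd (fst (rho u w)) \<and> odd (snd (rho u w)) \<and> u^2+15*w^2 = 4*((fst (rho u w))^2 + 15*(snd (rho u w))^2)
     \<and> rhoi (fst (rho u w)) (snd (rho u w)) = (u,w)"
proof (cases "4 dvd (u-w)")
  case True
  then have "(u-w) mod 16 = 8" using K[OF assms(1,2)] assms(3) by blast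
  then obtain k where k: "u = w + 16*k + 8" by (metis mod_div_decomp add.commute add.left_commute mult.commute diff_eq_eq)
  have r: "rho u w = (-(2*(k+w)+1), 2*k+1)" unfolding rho_def using True
    by (simp add: k divx)
  have "4 dvd (-(2*(k+w)+1) - (2*k+1))" using assms(2) by presburger
  then have ri: "rhoi (-(2*(k+w)+1)) (2*k+1) = (u,w)" unfolding rhoi_def k
    by (simp add: divx)
  show ?thesis unfolding r using ri by (simp add: k power2_eq_square algebra_simps)
next
  case False
  then have "(u+w) mod 16 = 8" using K[OF assms(1,2)] assms(3) by blast
  then obtain k where k: "u = 16*k + 8 - w" by (metis mod_div_decomp add.commute add.left_commute mult.commute diff_eq_eq)
  have r: "rho u w = (2*k+1-2*w, 2*k+1)" unfolding rho_def using False
    by (simp add: k divx)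
  have "\<not> 4 dvd ((2*k+1-2*w) - (2*k+1))" using assms(2) by presburger
  then have ri: "rhoi (2*k+1-2*w) (2*k+1) = (u,w)" unfolding rhoi_def k
    by (simp add: divx)
  show ?thesis unfolding r using ri by (simp add: k power2_eq_square algebra_simps)
qed



lemma rhoi_ok: fixes P W :: int
  assumes "odd P" "odd W"
  shows "odd (fst (rhoi P W)) \<and> odd (snd (rhoi P W)) \<and> ((fst (rhoi P W))^2+15*(snd (rhoi P W))^2) mod 32 = 0
     \<and> rho (fst (rhoi P W)) (snd (rhoi P W)) = (P,W)"
proof (cases "4 dvd (P-W)")
  case True
  then obtain j where j: "P = W + 4*j" by (metis dvd_def diff_eq_eq add.commute)
  have r: "rhoi P W = (7*W - 2*j, -W-2*j)" unfolding rhoi_def using True by (simp add: j divx)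
  obtain a where a: "W = 2*a+1" using assms(2) by (metis oddE)
  have "4 dvd ((7*W - 2*j) - (-W-2*j))" by presburger
  then have ri: "rho (7*W - 2*j) (-W-2*j) = (P,W)" unfolding rho_def by (simp add: j divx)
  have "(7*W - 2*j)^2 + 15*(-W-2*j)^2 = 32*(2*W^2 + W*j + 2*j^2)"
    by (simp add: power2_eq_square algebra_simps)
  moreover have "odd (7*W - 2*j)" "odd (-W-2*j)" using assms(2) by presburger+
  ultimately show ?thesis unfolding r using ri by simp
next
  case False
  then have "(P - W) mod 4 = 2" using assms by presburger
  then obtain j where j: "P = W + 4*j + 2" by (metis mod_div_decomp add.commute add.left_commute mult.commute diff_eq_eq)
  have r: "rhoi P W = (8*W + 2*j + 1, -2*j-1)" unfolding rhoi_def using False by (simp add: j divx)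
  have "\<not> 4 dvd ((8*W + 2*j + 1) - (-2*j-1))" by presburger
  then have ri: "rho (8*W + 2*j + 1) (-2*j-1) = (P,W)" unfolding rho_def by (simp add: j divx)
  obtain a where a: "W = 2*a+1" using assms(2) by (metis oddE)
  have "(8*W + 2*j + 1)^2 + 15*(-2*j-1)^2 = 32*(2*W^2 + W*j + 2*j^2 + 2*j + a + 1)"
    unfolding a by (simp add: power2_eq_square algebra_simps)
  moreover have "odd (8*W + 2*j + 1)" "odd (-2*j-1)" by presburger+
  ultimately show ?thesis unfolding r using ri by simp
qed

definition sig :: "int \<Rightarrow> int \<Rightarrow> int \<times> int" where
  "sig a b = (if 4 dvd (a-b) then ((-(a+3*b)) div 4, (a-b) div 4) else ((3*b-a) div 4, (-(a+b)) div 4))"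
definition g1 :: "int \<Rightarrow> int \<Rightarrow> int \<times> int" where "g1 c d = (-c+3*d, -c-d)"
definition g2 :: "int \<Rightarrow> int \<Rightarrow> int \<times> int" where "g2 c d = (-c-3*d, c-d)"

lemma sig_ok: fixes a b :: int
  assumes "odd a" "odd b"
  shows "odd (fst (sig a b) + snd (sig a b)) \<and> a^2+3*b^2 = 4*((fst (sig a b))^2 + 3*(snd (sig a b))^2)
     \<and> ((a,b) = g1 (fst (sig a b)) (snd (sig a b)) \<or> (a,b) = g2 (fst (sig a b)) (snd (sig a b)))"
proof (cases "4 dvd (a-b)")
  case True
  then obtain j where j: "a = b + 4*j" by (metis dvd_def diff_eq_eq add.commute)
  have r: "sig a b = (-j-b, j)" unfolding sig_def using True by (simp add: j divx)
  show ?thesis unfolding r using assms(2) by (simp add: j g1_def power2_eq_square algebra_simps)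
next
  case False
  then have "4 dvd (a+b)" using assms by presburger
  then obtain j where j: "a = 4*j - b" by (metis dvd_def eq_diff_eq)
  have r: "sig a b = (b-j, -j)" unfolding sig_def using False by (simp add: j divx)
  have "odd (b - j + - j)" using assms(2) by presburger
  then show ?thesis unfolding r by (simp add: j g2_def power2_eq_square algebra_simps)
qed

lemma g_ok: fixes c d :: int
  assumes "odd (c+d)"
  shows "odd (fst (g1 c d)) \<and> odd (snd (g1 c d)) \<and> odd (fst (g2 c d)) \<and> odd (snd (g2 c d))
    \<and> sig (fst (g1 c d)) (snd (g1 c d)) = (c,d) \<and> sig (fst (g2 c d)) (snd (g2 c d)) = (c,d)
    \<and> g1 c d \<noteq> g2 c d"
proof -
  have o: "odd (-c+3*d)" "odd (-c-d)" "odd (-c-3*d)" "odd (c-d)" using assms by presburger+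
  have s1: "sig (-c+3*d) (-c-d) = (c,d)" unfolding sig_def by (simp add: divx)
  have "\<not> 4 dvd ((-c-3*d) - (c-d))" using assms by presburger
  then have s2: "sig (-c-3*d) (c-d) = (c,d)" unfolding sig_def by (simp add: divx)
  have ne: "g1 c d \<noteq> g2 c d" using assms unfolding g1_def g2_def by auto
  show ?thesis using o s1 s2 ne unfolding g1_def g2_def by simp
qed

definition tau :: "int \<Rightarrow> int \<Rightarrow> int \<times> int" where
  "tau u w = (if 4 dvd (u-w) then ((-(u+15*w)) div 16, (u-w) div 16) else ((15*w-u) div 16, (u+w) div 16))"
definition h1 :: "int \<Rightarrow> int \<Rightarrow> int \<times> int" where "h1 y z = (15*z-y, -(y+z))"
definition h2 :: "int \<Rightarrow> int \<Rightarrow> int \<times> int" where "h2 y z = (15*z-y, y+z)"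

lemma tau_ok: fixes u w :: int
  assumes "odd u" "odd w" "(u^2+15*w^2) mod 32 = 16"
  shows "odd (fst (tau u w) + snd (tau u w)) \<and> u^2+15*w^2 = 16*((fst (tau u w))^2 + 15*(snd (tau u w))^2)
     \<and> ((u,w) = h1 (fst (tau u w)) (snd (tau u w)) \<or> (u,w) = h2 (fst (tau u w)) (snd (tau u w)))"
proof (cases "4 dvd (u-w)")
  case True
  then have "(u-w) mod 16 = 0" using K[OF assms(1,2)] assms(3) by blast
  then obtain k where k: "u = w + 16*k" by (metis dvd_def diff_eq_eq add.commute mod_0_imp_dvd)
  have r: "tau u w = (-k-w, k)" unfolding tau_def using True by (simp add: k divx)
  show ?thesis unfolding r using assms(2) by (simp add: k h1_def power2_eq_square algebra_simps)
next
  case False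
  then have "(u+w) mod 16 = 0" using K[OF assms(1,2)] assms(3) by blast
  then obtain k where k: "u = 16*k - w" by (metis dvd_def eq_diff_eq mod_0_imp_dvd)
  have r: "tau u w = (w-k, k)" unfolding tau_def using False by (simp add: k divx)
  show ?thesis unfolding r using assms(2) by (simp add: k h2_def power2_eq_square algebra_simps)
qed

lemma h_ok: fixes y z :: int
  assumes "odd (y+z)"
  shows "odd (fst (h1 y z)) \<and> odd (snd (h1 y z)) \<and> odd (fst (h2 y z)) \<and> odd (snd (h2 y z))
    \<and> tau (fst (h1 y z)) (snd (h1 y z)) = (y,z) \<and> tau (fst (h2 y z)) (snd (h2 y z)) = (y,z)
    \<and> h1 y z \<noteq> h2 y z
    \<and> (fst (h1 y z))^2 + 15*(snd (h1 y z))^2 = 16*(y^2+15*z^2)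
    \<and> (fst (h2 y z))^2 + 15*(snd (h2 y z))^2 = 16*(y^2+15*z^2)"
proof -
  have o: "odd (15*z-y)" "odd (-(y+z))" "odd (y+z)" using assms by presburger+
  have s1: "tau (15*z-y) (-(y+z)) = (y,z)" unfolding tau_def by (simp add: divx)
  have "\<not> 4 dvd ((15*z-y) - (y+z))" using assms by presburger
  then have s2: "tau (15*z-y) (y+z) = (y,z)" unfolding tau_def by (simp add: divx)
  have "y + z \<noteq> 0" using assms by presburger
  then have ne: "h1 y z \<noteq> h2 y z" unfolding h1_def h2_def by auto
  have n: "(15*z-y)^2 + 15*(y+z)^2 = 16*(y^2+15*z^2)" "(15*z-y)^2 + 15*(-(y+z))^2 = 16*(y^2+15*z^2)"
    by (simp_all add: power2_eq_square algebra_simps)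
  show ?thesis using o s1 s2 ne n unfolding h1_def h2_def by simp
qed



lemma two_to_one:
  fixes f :: "'a \<Rightarrow> 'b" and p1 p2 :: "'b \<Rightarrow> 'a"
  assumes A: "\<And>a. a \<in> A \<Longrightarrow> f a \<in> B \<and> (a = p1 (f a) \<or> a = p2 (f a))"
    and B: "\<And>b. b \<in> B \<Longrightarrow> p1 b \<in> A \<and> p2 b \<in> A \<and> f (p1 b) = b \<and> f (p2 b) = b \<and> p1 b \<noteq> p2 b"
  shows "card A = 2 * card B"
proof -
  define F where "F = (\<lambda>(b, i::bool). if i then p1 b else p2 b)"
  have inj: "inj_on F (B \<times> UNIV)"
  proof (rule inj_onI)
    fix p q assume p: "p \<in> B \<times> UNIV" and q: "q \<in> B \<times> UNIV" and e: "F p = F q"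
    obtain b i where pb: "p = (b,i)" by (cases p)
    obtain b' i' where qb: "q = (b',i')" by (cases q)
    have bB: "b \<in> B" "b' \<in> B" using p q pb qb by auto
    have "f (F p) = b" using B[OF bB(1)] unfolding pb F_def by (cases i) auto
    moreover have "f (F q) = b'" using B[OF bB(2)] unfolding qb F_def by (cases i') auto
    ultimately have bb: "b = b'" using e by simp
    show "p = q"
    proof (rule ccontr)
      assume "p \<noteq> q"
      then have "i \<noteq> i'" using pb qb bb by auto
      then show False using e B[OF bB(1)] unfolding pb qb F_def bb by (cases i) auto
    qed
  qed
  have img: "F ` (B \<times> UNIV) = A"
  proof
    show "F ` (B \<times> UNIV) \<subseteq> A" using B unfolding F_def by auto
    show "A \<subseteq> F ` (B \<times> UNIV)"
    proof
      fix a assume a: "a \<in> A"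
      have fa: "f a \<in> B" using A[OF a] by blast
      have "a = F (f a, True) \<or> a = F (f a, False)" using A[OF a] unfolding F_def by auto
      then obtain i where ai: "a = F (f a, i)" by blast
      show "a \<in> F ` (B \<times> UNIV)" by (rule image_eqI[where f=F and x="(f a, i)", OF ai]) (use fa in auto)
    qed
  qed
  have "card A = card (B \<times> (UNIV :: bool set))"
    using card_image[OF inj] img by simp
  also have "\<dots> = 2 * card B" by (simp add: card_cartesian_product)
  finally show ?thesis .
qed

lemma tri: fixes x :: int shows "(2*x+1)^2 = 8*(x*(x+1) div 2) + 1"
proof -
  have "even (x*(x+1))" by simp
  then have "x*(x+1) = 2*(x*(x+1) div 2)" by simp
  moreover have "(2*x+1)^2 = 4*(x*(x+1)) + 1" by (simp add: power2_eq_square algebra_simps)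
  ultimately show ?thesis by linarith
qed

lemma t_odd: "t a b c n = card {(u,v,w). odd u \<and> odd v \<and> odd w \<and> a*u^2+b*v^2+c*w^2 = 8*n+a+b+c}"
proof -
  define F where "F = (\<lambda>(x::int,y::int,z::int). (2*x+1, 2*y+1, 2*z+1))"
  define G where "G = (\<lambda>(u::int,v::int,w::int). (u div 2, v div 2, w div 2))"
  have key: "n = a * (x * (x + 1) div 2) + b * (y * (y + 1) div 2) + c * (z * (z + 1) div 2)
     \<longleftrightarrow> a*(2*x+1)^2+b*(2*y+1)^2+c*(2*z+1)^2 = 8*n+a+b+c" for x y z :: int
    unfolding tri by (auto simp: algebra_simps)
  have "bij_betw F {(x, y, z).
     n = a * (x * (x + 1) div 2) + b * (y * (y + 1) div 2) + c * (z * (z + 1) div 2)}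
     {(u,v,w). odd u \<and> odd v \<and> odd w \<and> a*u^2+b*v^2+c*w^2 = 8*n+a+b+c}"
  proof (rule bij_betw_byWitness[where f'=G])
    show "\<forall>p\<in>{(x, y, z). n = a * (x * (x + 1) div 2) + b * (y * (y + 1) div 2) + c * (z * (z + 1) div 2)}. G (F p) = p"
      unfolding F_def G_def by auto
    show "\<forall>p\<in>{(u,v,w). odd u \<and> odd v \<and> odd w \<and> a*u^2+b*v^2+c*w^2 = 8*n+a+b+c}. F (G p) = p"
      unfolding F_def G_def by auto
    show "F ` {(x, y, z). n = a * (x * (x + 1) div 2) + b * (y * (y + 1) div 2) + c * (z * (z + 1) div 2)}
      \<subseteq> {(u,v,w). odd u \<and> odd v \<and> odd w \<and> a*u^2+b*v^2+c*w^2 = 8*n+a+b+c}"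
      unfolding F_def using key by auto
    show "G ` {(u,v,w). odd u \<and> odd v \<and> odd w \<and> a*u^2+b*v^2+c*w^2 = 8*n+a+b+c}
      \<subseteq> {(x, y, z). n = a * (x * (x + 1) div 2) + b * (y * (y + 1) div 2) + c * (z * (z + 1) div 2)}"
    proof
      fix q assume "q \<in> G ` {(u,v,w). odd u \<and> odd v \<and> odd w \<and> a*u^2+b*v^2+c*w^2 = 8*n+a+b+c}"
      then obtain u v w where q: "q = (u div 2, v div 2, w div 2)" and o: "odd u" "odd v" "odd w"
        and e: "a*u^2+b*v^2+c*w^2 = 8*n+a+b+c" unfolding G_def by auto
      have "u = 2*(u div 2)+1" "v = 2*(v div 2)+1" "w = 2*(w div 2)+1" using o by presburger+
      then show "q \<in> {(x, y, z). n = a * (x * (x + 1) div 2) + b * (y * (y + 1) div 2) + c * (z * (z + 1) div 2)}"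
        using key[of "u div 2" "v div 2" "w div 2"] e q by simp
    qed
  qed
  then show ?thesis unfolding t_def by (rule bij_betw_same_card)
qed


lemma sq8: fixes x :: int shows "\<exists>q. x^2 = 8*q + (x mod 4)^2"
proof -
  have x: "x = 4*(x div 4) + x mod 4" by simp
  define q where "q = x div 4" define r where "r = x mod 4"
  have "x^2 = (4*q+r)^2" using x unfolding q_def r_def by simp
  also have "\<dots> = 8*(2*q^2 + q*r) + r^2" by (simp add: power2_eq_square algebra_simps)
  finally show ?thesis unfolding r_def by blast
qed

lemma form8: fixes x y z A B C :: int
  shows "(A*x^2+B*y^2+C*z^2) mod 8 = (A*(x mod 4)^2+B*(y mod 4)^2+C*(z mod 4)^2) mod 8"
proof -
  obtain q1 q2 q3 where q: "x^2 = 8*q1 + (x mod 4)^2" "y^2 = 8*q2 + (y mod 4)^2" "z^2 = 8*q3 + (z mod 4)^2"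
    using sq8 by metis
  have "A*x^2+B*y^2+C*z^2 = 8*(A*q1+B*q2+C*q3) + (A*(x mod 4)^2+B*(y mod 4)^2+C*(z mod 4)^2)"
    unfolding q by (simp add: algebra_simps)
  then show ?thesis by (metis mod_mult_self4)
qed

lemma mod4_cases: fixes r :: int assumes "0 \<le> r" "r < 4" shows "r = 0 \<or> r = 1 \<or> r = 2 \<or> r = 3"
  using assms by auto

lemma M1_facts: fixes x y z k :: int assumes "x^2+4*y^2+15*z^2 = 8*k+5"
  shows "odd x \<and> even z \<and> odd (y + z div 2)"
proof -
  define a where "a = x mod 4" define b where "b = y mod 4" define c where "c = z mod 4"
  have m: "(1*a^2+4*b^2+15*c^2) mod 8 = 5" using form8[of 1 x 4 y 15 z] assms unfolding a_def b_def c_def by simp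
  have e: "odd x \<longleftrightarrow> odd a" "even z \<longleftrightarrow> even c" "odd (y + z div 2) \<longleftrightarrow> odd (b + c div 2)"
    unfolding a_def b_def c_def by presburger+
  have "a = 0 \<or> a = 1 \<or> a = 2 \<or> a = 3" "b = 0 \<or> b = 1 \<or> b = 2 \<or> b = 3" "c = 0 \<or> c = 1 \<or> c = 2 \<or> c = 3"
    unfolding a_def b_def c_def by (auto intro!: mod4_cases)
  then show ?thesis unfolding e using m by (elim disjE; simp)
qed




lemma modh: fixes X K r :: int assumes "X = 32*K + r" "0 \<le> r" "r < 32" shows "X mod 32 = r"
  using assms by (simp add: mod_pos_pos_trivial)

lemma case1: fixes n :: int assumes "n mod 4 = 0"
  shows "t 1 4 15 n = 2 * N 1 4 15 (2 * n + 5)"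
proof -
  have "4 dvd n" using assms by presburger
  then obtain k where k: "n = 4*k" by (elim dvdE)
  define Od where "Od = {(u::int,v::int,w::int). odd u \<and> odd v \<and> odd w \<and> 1*u^2+4*v^2+15*w^2 = 8*n+1+4+15}"
  define M where "M = {(x::int, y::int, z::int). 2*n+5 = 1 * x^2 + 4 * y^2 + 15 * z^2}"
  define f where "f = (\<lambda>(u::int,v::int,w::int). (v, fst (tau u w), 2 * snd (tau u w)))"
  define G1 where "G1 = (\<lambda>(x::int,y::int,z::int). (fst (h1 y (z div 2)), x, snd (h1 y (z div 2))))"
  define G2 where "G2 = (\<lambda>(x::int,y::int,z::int). (fst (h2 y (z div 2)), x, snd (h2 y (z div 2))))"
  have c: "card Od = 2 * card M"
  proof (rule two_to_one[where f=f and ?p1.0=G1 and ?p2.0=G2])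
    fix a assume a: "a \<in> Od"
    then obtain u v w where a': "a = (u,v,w)" and o: "odd u" "odd v" "odd w"
      and e: "u^2+4*v^2+15*w^2 = 8*n+20" unfolding Od_def by auto
    obtain j where j: "v^2 = 8*j+1" using odd_sq[OF o(2)] by blast
    have "u^2+15*w^2 = 32*(k-j)+16" using e j k by (simp add: right_diff_distrib; linarith)
    then have m: "(u^2+15*w^2) mod 32 = 16" by (rule modh) simp_all
    define y where "y = fst (tau u w)" define z where "z = snd (tau u w)"
    have T: "odd (y+z)" "u^2+15*w^2 = 16*(y^2+15*z^2)" "(u,w) = h1 y z \<or> (u,w) = h2 y z"
      using tau_ok[OF o(1,3) m] unfolding y_def z_def by auto
    have fa: "f a = (v, y, 2*z)" unfolding a' f_def y_def z_def by simp
    have "2*n+5 = 1 * v^2 + 4 * y^2 + 15 * (2*z)^2" using e T(2) by (simp add: power_mult_distrib)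
    then have "f a \<in> M" unfolding fa M_def by simp
    moreover have "G1 (f a) = (fst (h1 y z), v, snd (h1 y z))" "G2 (f a) = (fst (h2 y z), v, snd (h2 y z))"
      unfolding fa G1_def G2_def by simp_all
    then have "a = G1 (f a) \<or> a = G2 (f a)" using T(3) unfolding a'
      by (auto simp: prod_eq_iff)
    ultimately show "f a \<in> M \<and> (a = G1 (f a) \<or> a = G2 (f a))" by blast
  next
    fix b assume b: "b \<in> M"
    then obtain x y z where b': "b = (x,y,z)" and e: "2*n+5 = x^2 + 4 * y^2 + 15 * z^2"
      unfolding M_def by auto
    have F: "odd x \<and> even z \<and> odd (y + z div 2)" using M1_facts[of x y z k] e k by simp
    define z' where "z' = z div 2"
    have zz: "z = 2*z'" using F unfolding z'_def by simp
    have H: "odd (fst (h1 y z')) \<and> odd (snd (h1 y z')) \<and> odd (fst (h2 y z')) \<and> odd (snd (h2 y z'))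
    \<and> tau (fst (h1 y z')) (snd (h1 y z')) = (y,z') \<and> tau (fst (h2 y z')) (snd (h2 y z')) = (y,z')
    \<and> h1 y z' \<noteq> h2 y z'
    \<and> (fst (h1 y z'))^2 + 15*(snd (h1 y z'))^2 = 16*(y^2+15*z'^2)
    \<and> (fst (h2 y z'))^2 + 15*(snd (h2 y z'))^2 = 16*(y^2+15*z'^2)"
      using h_ok F unfolding z'_def by blast
    have e2: "x^2 + 4*y^2 + 15*(4*z'^2) = 2*n+5" using e unfolding zz by (simp add: power_mult_distrib)
    have g1: "G1 b = (fst (h1 y z'), x, snd (h1 y z'))" "G2 b = (fst (h2 y z'), x, snd (h2 y z'))"
      unfolding G1_def G2_def b' z'_def by simp_all
    have n1: "(fst (h1 y z'))^2 + 4*x^2 + 15*(snd (h1 y z'))^2 = 8*n+20"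
      using conjunct1[OF conjunct2[OF conjunct2[OF conjunct2[OF conjunct2[OF conjunct2[OF conjunct2[OF conjunct2[OF H]]]]]]]] e2 by (simp add: distrib_left)
    have n2: "(fst (h2 y z'))^2 + 4*x^2 + 15*(snd (h2 y z'))^2 = 8*n+20"
      using conjunct2[OF conjunct2[OF conjunct2[OF conjunct2[OF conjunct2[OF conjunct2[OF conjunct2[OF conjunct2[OF H]]]]]]]] e2 by (simp add: distrib_left)
    have "G1 b \<in> Od" unfolding g1 Od_def using H F n1 by simp
    moreover have "G2 b \<in> Od" unfolding g1 Od_def using H F n2 by simp
    moreover have "f (G1 b) = b" "f (G2 b) = b" unfolding g1 f_def using b' H zz by simp_all
    moreover have "G1 b \<noteq> G2 b" unfolding g1 using H by (auto simp: prod_eq_iff)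
    ultimately show "G1 b \<in> Od \<and> G2 b \<in> Od \<and> f (G1 b) = b \<and> f (G2 b) = b \<and> G1 b \<noteq> G2 b" by blast
  qed
  have tO: "t 1 4 15 n = card Od" unfolding Od_def by (rule t_odd)
  have NM: "N 1 4 15 (2 * n + 5) = card M" unfolding M_def N_def by simp
  show ?thesis unfolding tO NM c ..
qed



lemma M2_facts: fixes x y z :: int assumes "(x^2+12*y^2+15*z^2) mod 8 = 3"
  shows "even x \<and> odd z \<and> odd (x div 2 + y)"
proof -
  define a where "a = x mod 4" define b where "b = y mod 4" define c where "c = z mod 4"
  have m: "(1*a^2+12*b^2+15*c^2) mod 8 = 3" using form8[of 1 x 12 y 15 z] assms unfolding a_def b_def c_def by simp
  have e: "even x \<longleftrightarrow> even a" "odd z \<longleftrightarrow> odd c" "odd (x div 2 + y) \<longleftrightarrow> odd (a div 2 + b)"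
    unfolding a_def b_def c_def by presburger+
  have "a = 0 \<or> a = 1 \<or> a = 2 \<or> a = 3" "b = 0 \<or> b = 1 \<or> b = 2 \<or> b = 3" "c = 0 \<or> c = 1 \<or> c = 2 \<or> c = 3"
    unfolding a_def b_def c_def by (auto intro!: mod4_cases)
  then show ?thesis unfolding e using m by (elim disjE; simp)
qed

lemma c2_bij: fixes n k :: int assumes k: "n = 4*k+2"
  shows "card {(u::int,v::int,w::int). odd u \<and> odd v \<and> odd w \<and> 1*u^2+12*v^2+15*w^2 = 8*n+1+12+15}
       = card {(p::int,q::int,r::int). odd p \<and> odd q \<and> odd r \<and> p^2+3*q^2+15*r^2 = 2*n+7}"
proof (rule bij_betw_same_card)
  define F where "F = (\<lambda>(u::int,v::int,w::int). (fst (rho u w), v, snd (rho u w)))"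
  define Fi where "Fi = (\<lambda>(p::int,q::int,r::int). (fst (rhoi p r), q, snd (rhoi p r)))"
  show "bij_betw F {(u::int,v::int,w::int). odd u \<and> odd v \<and> odd w \<and> 1*u^2+12*v^2+15*w^2 = 8*n+1+12+15}
       {(p::int,q::int,r::int). odd p \<and> odd q \<and> odd r \<and> p^2+3*q^2+15*r^2 = 2*n+7}"
  proof (rule bij_betw_byWitness[where f'=Fi])
    have A: "odd (fst (rho u w)) \<and> odd (snd (rho u w)) \<and> u^2+15*w^2 = 4*((fst (rho u w))^2 + 15*(snd (rho u w))^2)
     \<and> rhoi (fst (rho u w)) (snd (rho u w)) = (u,w)"
      if h: "odd u" "odd v" "odd w" "1*u^2+12*v^2+15*w^2 = 8*n+1+12+15" for u v w
    proof -
      obtain j where j: "v^2 = 8*j+1" using odd_sq[OF h(2)] by blast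
      have "u^2+15*w^2 = 32*(k-3*j+1)+0" using h(4) j k by (simp add: right_diff_distrib distrib_left; linarith)
      then have m: "(u^2+15*w^2) mod 32 = 0" by (rule modh) simp_all
      show ?thesis using rho_ok[OF h(1,3) m] .
    qed
    have B: "odd (fst (rhoi p r)) \<and> odd (snd (rhoi p r)) \<and> rho (fst (rhoi p r)) (snd (rhoi p r)) = (p,r)
       \<and> (fst (rhoi p r))^2+15*(snd (rhoi p r))^2 = 4*(p^2+15*r^2)"
      if h: "odd p" "odd r" for p r
    proof -
      have R: "odd (fst (rhoi p r)) \<and> odd (snd (rhoi p r)) \<and> ((fst (rhoi p r))^2+15*(snd (rhoi p r))^2) mod 32 = 0
     \<and> rho (fst (rhoi p r)) (snd (rhoi p r)) = (p,r)" using rhoi_ok[OF h] .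
      define U where "U = fst (rhoi p r)" define W where "W = snd (rhoi p r)"
      have oU: "odd U" and oW: "odd W" and m: "(U^2+15*W^2) mod 32 = 0" and rr: "rho U W = (p,r)"
        using R unfolding U_def W_def by auto
      have "U^2+15*W^2 = 4*((fst (rho U W))^2 + 15*(snd (rho U W))^2)" using rho_ok[OF oU oW m] by auto
      then have "U^2+15*W^2 = 4*(p^2+15*r^2)" unfolding rr by simp
      then have "(fst (rhoi p r))^2+15*(snd (rhoi p r))^2 = 4*(p^2+15*r^2)" unfolding U_def W_def .
      then show ?thesis using R by simp
    qed
    show "\<forall>a\<in>{(u::int,v::int,w::int). odd u \<and> odd v \<and> odd w \<and> 1*u^2+12*v^2+15*w^2 = 8*n+1+12+15}. Fi (F a) = a"
    proof
      fix a assume "a \<in> {(u::int,v::int,w::int). odd u \<and> odd v \<and> odd w \<and> 1*u^2+12*v^2+15*w^2 = 8*n+1+12+15}"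
      then obtain u v w where a: "a = (u,v,w)" "odd u" "odd v" "odd w" "1*u^2+12*v^2+15*w^2 = 8*n+1+12+15" by auto
      show "Fi (F a) = a" using A[OF a(2-5)] unfolding a(1) F_def Fi_def by simp
    qed
    show "\<forall>b\<in>{(p::int,q::int,r::int). odd p \<and> odd q \<and> odd r \<and> p^2+3*q^2+15*r^2 = 2*n+7}. F (Fi b) = b"
    proof
      fix b assume "b \<in> {(p::int,q::int,r::int). odd p \<and> odd q \<and> odd r \<and> p^2+3*q^2+15*r^2 = 2*n+7}"
      then obtain p q r where b: "b = (p,q,r)" "odd p" "odd q" "odd r" by auto
      show "F (Fi b) = b" using B[OF b(2,4)] unfolding b(1) F_def Fi_def by simp
    qed
    show "F ` {(u::int,v::int,w::int). odd u \<and> odd v \<and> odd w \<and> 1*u^2+12*v^2+15*w^2 = 8*n+1+12+15}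
       \<subseteq> {(p::int,q::int,r::int). odd p \<and> odd q \<and> odd r \<and> p^2+3*q^2+15*r^2 = 2*n+7}"
    proof
      fix c assume "c \<in> F ` {(u::int,v::int,w::int). odd u \<and> odd v \<and> odd w \<and> 1*u^2+12*v^2+15*w^2 = 8*n+1+12+15}"
      then obtain u v w where a: "c = F (u,v,w)" "odd u" "odd v" "odd w" "1*u^2+12*v^2+15*w^2 = 8*n+1+12+15" by auto
      have X: "odd (fst (rho u w)) \<and> odd (snd (rho u w)) \<and> u^2+15*w^2 = 4*((fst (rho u w))^2 + 15*(snd (rho u w))^2)"
        using A[OF a(2-5)] by blast
      then have "(fst (rho u w))^2 + 3*v^2 + 15*(snd (rho u w))^2 = 2*n+7" using a(5) by (simp add: distrib_left)
      then show "c \<in> {(p::int,q::int,r::int). odd p \<and> odd q \<and> odd r \<and> p^2+3*q^2+15*r^2 = 2*n+7}"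
        using X a unfolding F_def by simp
    qed
    show "Fi ` {(p::int,q::int,r::int). odd p \<and> odd q \<and> odd r \<and> p^2+3*q^2+15*r^2 = 2*n+7}
      \<subseteq> {(u::int,v::int,w::int). odd u \<and> odd v \<and> odd w \<and> 1*u^2+12*v^2+15*w^2 = 8*n+1+12+15}"
    proof
      fix c assume "c \<in> Fi ` {(p::int,q::int,r::int). odd p \<and> odd q \<and> odd r \<and> p^2+3*q^2+15*r^2 = 2*n+7}"
      then obtain p q r where b: "c = Fi (p,q,r)" "odd p" "odd q" "odd r" "p^2+3*q^2+15*r^2 = 2*n+7" by auto
      have X: "odd (fst (rhoi p r)) \<and> odd (snd (rhoi p r)) \<and> (fst (rhoi p r))^2+15*(snd (rhoi p r))^2 = 4*(p^2+15*r^2)"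
        using B[OF b(2,4)] by blast
      then have "1*(fst (rhoi p r))^2 + 12*q^2 + 15*(snd (rhoi p r))^2 = 8*n+1+12+15" using b(5) by (simp add: distrib_left)
      then show "c \<in> {(u::int,v::int,w::int). odd u \<and> odd v \<and> odd w \<and> 1*u^2+12*v^2+15*w^2 = 8*n+1+12+15}"
        using X b unfolding Fi_def by simp
    qed
  qed
qed

lemma c2_two: fixes n k :: int assumes k: "n = 4*k+2"
  shows "card {(p::int,q::int,r::int). odd p \<and> odd q \<and> odd r \<and> p^2+3*q^2+15*r^2 = 2*n+7}
       = 2 * card {(x::int, y::int, z::int). 2*n+7 = 1 * x^2 + 12 * y^2 + 15 * z^2}"
proof -
  define S where "S = {(p::int,q::int,r::int). odd p \<and> odd q \<and> odd r \<and> p^2+3*q^2+15*r^2 = 2*n+7}"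
  define M where "M = {(x::int, y::int, z::int). 2*n+7 = 1 * x^2 + 12 * y^2 + 15 * z^2}"
  define f where "f = (\<lambda>(p::int,q::int,r::int). (2 * fst (sig p q), snd (sig p q), r))"
  define G1 where "G1 = (\<lambda>(x::int,y::int,z::int). (fst (g1 (x div 2) y), snd (g1 (x div 2) y), z))"
  define G2 where "G2 = (\<lambda>(x::int,y::int,z::int). (fst (g2 (x div 2) y), snd (g2 (x div 2) y), z))"
  have "card S = 2 * card M"
  proof (rule two_to_one[where f=f and ?p1.0=G1 and ?p2.0=G2])
    fix a assume a: "a \<in> S"
    then obtain p q r where a': "a = (p,q,r)" and o: "odd p" "odd q" "odd r"
      and e: "p^2+3*q^2+15*r^2 = 2*n+7" unfolding S_def by auto
    define c where "c = fst (sig p q)" define d where "d = snd (sig p q)"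
    have T: "odd (c+d)" "p^2+3*q^2 = 4*(c^2+3*d^2)" "(p,q) = g1 c d \<or> (p,q) = g2 c d"
      using sig_ok[OF o(1,2)] unfolding c_def d_def by auto
    have fa: "f a = (2*c, d, r)" unfolding a' f_def c_def d_def by simp
    have "2*n+7 = 1 * (2*c)^2 + 12 * d^2 + 15 * r^2" using e T(2) by (simp add: power_mult_distrib)
    then have "f a \<in> M" unfolding fa M_def by simp
    moreover have "G1 (f a) = (fst (g1 c d), snd (g1 c d), r)" "G2 (f a) = (fst (g2 c d), snd (g2 c d), r)"
      unfolding fa G1_def G2_def by simp_all
    then have "a = G1 (f a) \<or> a = G2 (f a)" using T(3) unfolding a'
      by (auto simp: prod_eq_iff)
    ultimately show "f a \<in> M \<and> (a = G1 (f a) \<or> a = G2 (f a))" by blast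
  next
    fix b assume b: "b \<in> M"
    then obtain x y z where b': "b = (x,y,z)" and e: "2*n+7 = x^2 + 12 * y^2 + 15 * z^2"
      unfolding M_def by auto
    have "(x^2 + 12 * y^2 + 15 * z^2) mod 8 = 3" unfolding e[symmetric] k by presburger
    then have F: "even x \<and> odd z \<and> odd (x div 2 + y)" by (rule M2_facts)
    define x' where "x' = x div 2"
    have xx: "x = 2*x'" using F unfolding x'_def by simp
    have H: "odd (fst (g1 x' y)) \<and> odd (snd (g1 x' y)) \<and> odd (fst (g2 x' y)) \<and> odd (snd (g2 x' y))
    \<and> sig (fst (g1 x' y)) (snd (g1 x' y)) = (x',y) \<and> sig (fst (g2 x' y)) (snd (g2 x' y)) = (x',y)
    \<and> g1 x' y \<noteq> g2 x' y"
      using g_ok F unfolding x'_def by blast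
    have N1: "(fst (g1 x' y))^2 + 3*(snd (g1 x' y))^2 = 4*(x'^2+3*y^2)"
    proof -
      have "(fst (g1 x' y))^2 + 3*(snd (g1 x' y))^2 = 4*((fst (sig (fst (g1 x' y)) (snd (g1 x' y))))^2 + 3*(snd (sig (fst (g1 x' y)) (snd (g1 x' y))))^2)"
        using sig_ok[of "fst (g1 x' y)" "snd (g1 x' y)"] H by blast
      then show ?thesis using H by simp
    qed
    have N2: "(fst (g2 x' y))^2 + 3*(snd (g2 x' y))^2 = 4*(x'^2+3*y^2)"
    proof -
      have "(fst (g2 x' y))^2 + 3*(snd (g2 x' y))^2 = 4*((fst (sig (fst (g2 x' y)) (snd (g2 x' y))))^2 + 3*(snd (sig (fst (g2 x' y)) (snd (g2 x' y))))^2)"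
        using sig_ok[of "fst (g2 x' y)" "snd (g2 x' y)"] H by blast
      then show ?thesis using H by simp
    qed
    have e2: "4*x'^2 + 12*y^2 + 15*z^2 = 2*n+7" using e unfolding xx by (simp add: power_mult_distrib)
    have g: "G1 b = (fst (g1 x' y), snd (g1 x' y), z)" "G2 b = (fst (g2 x' y), snd (g2 x' y), z)"
      unfolding G1_def G2_def b' x'_def by simp_all
    have n1: "(fst (g1 x' y))^2 + 3*(snd (g1 x' y))^2 + 15*z^2 = 2*n+7" using N1 e2 by (simp add: distrib_left)
    have n2: "(fst (g2 x' y))^2 + 3*(snd (g2 x' y))^2 + 15*z^2 = 2*n+7" using N2 e2 by (simp add: distrib_left)
    have "G1 b \<in> S" unfolding g S_def using H F n1 by simp
    moreover have "G2 b \<in> S" unfolding g S_def using H F n2 by simp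
    moreover have "f (G1 b) = b" "f (G2 b) = b" unfolding g f_def using b' H xx by simp_all
    moreover have "G1 b \<noteq> G2 b" unfolding g using H by (auto simp: prod_eq_iff)
    ultimately show "G1 b \<in> S \<and> G2 b \<in> S \<and> f (G1 b) = b \<and> f (G2 b) = b \<and> G1 b \<noteq> G2 b" by blast
  qed
  then show ?thesis unfolding S_def M_def .
qed

lemma case2: fixes n :: int assumes "n mod 4 = 2"
  shows "t 1 12 15 n = 2 * N 1 12 15 (2 * n + 7)"
proof -
  obtain k where k: "n = 4*k+2" using assms by (metis mult.commute mod_div_decomp add.commute)
  have tO: "t 1 12 15 n = card {(u::int,v::int,w::int). odd u \<and> odd v \<and> odd w \<and> 1*u^2+12*v^2+15*w^2 = 8*n+1+12+15}"
    by (rule t_odd)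
  have NM: "N 1 12 15 (2 * n + 7) = card {(x::int, y::int, z::int). 2*n+7 = 1 * x^2 + 12 * y^2 + 15 * z^2}"
    unfolding N_def by simp
  show ?thesis unfolding tO NM c2_bij[OF k] c2_two[OF k] ..
qed



lemma modh3: fixes X K r :: int assumes "X = 32*K + r" "0 \<le> r" "r < 32" shows "X mod 32 = r"
  using assms by (simp add: mod_pos_pos_trivial)

lemma M3_facts: fixes x y z :: int assumes "(x^2+15*y^2+20*z^2) mod 8 = 5"
  shows "odd x \<and> even y \<and> odd (z + y div 2)"
proof -
  define a where "a = x mod 4" define b where "b = y mod 4" define c where "c = z mod 4"
  have m: "(1*a^2+15*b^2+20*c^2) mod 8 = 5" using form8[of 1 x 15 y 20 z] assms unfolding a_def b_def c_def by simp
  have e: "odd x \<longleftrightarrow> odd a" "even y \<longleftrightarrow> even b" "odd (z + y div 2) \<longleftrightarrow> odd (c + b div 2)"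
    unfolding a_def b_def c_def by presburger+
  have "a = 0 \<or> a = 1 \<or> a = 2 \<or> a = 3" "b = 0 \<or> b = 1 \<or> b = 2 \<or> b = 3" "c = 0 \<or> c = 1 \<or> c = 2 \<or> c = 3"
    unfolding a_def b_def c_def by (auto intro!: mod4_cases)
  then show ?thesis unfolding e using m by (elim disjE; simp)
qed

lemma rhoi_norm: fixes p r :: int assumes h: "odd p" "odd r"
  shows "odd (fst (rhoi p r)) \<and> odd (snd (rhoi p r)) \<and> rho (fst (rhoi p r)) (snd (rhoi p r)) = (p,r)
       \<and> (fst (rhoi p r))^2+15*(snd (rhoi p r))^2 = 4*(p^2+15*r^2)"
proof -
  have R: "odd (fst (rhoi p r)) \<and> odd (snd (rhoi p r)) \<and> ((fst (rhoi p r))^2+15*(snd (rhoi p r))^2) mod 32 = 0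
     \<and> rho (fst (rhoi p r)) (snd (rhoi p r)) = (p,r)" using rhoi_ok[OF h] .
  define U where "U = fst (rhoi p r)" define W where "W = snd (rhoi p r)"
  have oU: "odd U" and oW: "odd W" and m: "(U^2+15*W^2) mod 32 = 0" and rr: "rho U W = (p,r)"
    using R unfolding U_def W_def by auto
  have "U^2+15*W^2 = 4*((fst (rho U W))^2 + 15*(snd (rho U W))^2)" using rho_ok[OF oU oW m] by auto
  then have "U^2+15*W^2 = 4*(p^2+15*r^2)" unfolding rr by simp
  then have "(fst (rhoi p r))^2+15*(snd (rhoi p r))^2 = 4*(p^2+15*r^2)" unfolding U_def W_def .
  then show ?thesis using R by simp
qed

lemma g_norm: fixes c d :: int assumes "odd (c+d)"
  shows "(fst (g1 c d))^2 + 3*(snd (g1 c d))^2 = 4*(c^2+3*d^2) \<and> (fst (g2 c d))^2 + 3*(snd (g2 c d))^2 = 4*(c^2+3*d^2)"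
  unfolding g1_def g2_def by (simp add: power2_eq_square algebra_simps)

lemma c3_bij: fixes n k :: int assumes k: "n = 4*k+2"
  shows "card {(u::int,v::int,w::int). odd u \<and> odd v \<and> odd w \<and> 1*u^2+15*v^2+20*w^2 = 8*n+1+15+20}
       = card {(p::int,q::int,r::int). odd p \<and> odd q \<and> odd r \<and> p^2+15*q^2+5*r^2 = 2*n+9}"
proof (rule bij_betw_same_card)
  define F where "F = (\<lambda>(u::int,v::int,w::int). (fst (rho u v), snd (rho u v), w))"
  define Fi where "Fi = (\<lambda>(p::int,q::int,r::int). (fst (rhoi p q), snd (rhoi p q), r))"
  show "bij_betw F {(u::int,v::int,w::int). odd u \<and> odd v \<and> odd w \<and> 1*u^2+15*v^2+20*w^2 = 8*n+1+15+20}
       {(p::int,q::int,r::int). odd p \<and> odd q \<and> odd r \<and> p^2+15*q^2+5*r^2 = 2*n+9}"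
  proof (rule bij_betw_byWitness[where f'=Fi])
    have A: "odd (fst (rho u v)) \<and> odd (snd (rho u v)) \<and> u^2+15*v^2 = 4*((fst (rho u v))^2 + 15*(snd (rho u v))^2)
     \<and> rhoi (fst (rho u v)) (snd (rho u v)) = (u,v)"
      if h: "odd u" "odd v" "odd w" "1*u^2+15*v^2+20*w^2 = 8*n+1+15+20" for u v w
    proof -
      obtain j where j: "w^2 = 8*j+1" using odd_sq[OF h(3)] by blast
      have "u^2+15*v^2 = 32*(k-5*j+1)+0" using h(4) j k by (simp add: right_diff_distrib distrib_left; linarith)
      then have m: "(u^2+15*v^2) mod 32 = 0" by (rule modh3) simp_all
      show ?thesis using rho_ok[OF h(1,2) m] .
    qed
    show "\<forall>a\<in>{(u::int,v::int,w::int). odd u \<and> odd v \<and> odd w \<and> 1*u^2+15*v^2+20*w^2 = 8*n+1+15+20}. Fi (F a) = a"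
    proof
      fix a assume "a \<in> {(u::int,v::int,w::int). odd u \<and> odd v \<and> odd w \<and> 1*u^2+15*v^2+20*w^2 = 8*n+1+15+20}"
      then obtain u v w where a: "a = (u,v,w)" "odd u" "odd v" "odd w" "1*u^2+15*v^2+20*w^2 = 8*n+1+15+20" by auto
      show "Fi (F a) = a" using A[OF a(2-5)] unfolding a(1) F_def Fi_def by simp
    qed
    show "\<forall>b\<in>{(p::int,q::int,r::int). odd p \<and> odd q \<and> odd r \<and> p^2+15*q^2+5*r^2 = 2*n+9}. F (Fi b) = b"
    proof
      fix b assume "b \<in> {(p::int,q::int,r::int). odd p \<and> odd q \<and> odd r \<and> p^2+15*q^2+5*r^2 = 2*n+9}"
      then obtain p q r where b: "b = (p,q,r)" "odd p" "odd q" "odd r" by auto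
      show "F (Fi b) = b" using rhoi_norm[OF b(2,3)] unfolding b(1) F_def Fi_def by simp
    qed
    show "F ` {(u::int,v::int,w::int). odd u \<and> odd v \<and> odd w \<and> 1*u^2+15*v^2+20*w^2 = 8*n+1+15+20}
       \<subseteq> {(p::int,q::int,r::int). odd p \<and> odd q \<and> odd r \<and> p^2+15*q^2+5*r^2 = 2*n+9}"
    proof
      fix c assume "c \<in> F ` {(u::int,v::int,w::int). odd u \<and> odd v \<and> odd w \<and> 1*u^2+15*v^2+20*w^2 = 8*n+1+15+20}"
      then obtain u v w where a: "c = F (u,v,w)" "odd u" "odd v" "odd w" "1*u^2+15*v^2+20*w^2 = 8*n+1+15+20" by auto
      have X: "odd (fst (rho u v)) \<and> odd (snd (rho u v)) \<and> u^2+15*v^2 = 4*((fst (rho u v))^2 + 15*(snd (rho u v))^2)"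
        using A[OF a(2-5)] by blast
      then have "(fst (rho u v))^2 + 15*(snd (rho u v))^2 + 5*w^2 = 2*n+9" using a(5) by (simp add: distrib_left)
      then show "c \<in> {(p::int,q::int,r::int). odd p \<and> odd q \<and> odd r \<and> p^2+15*q^2+5*r^2 = 2*n+9}"
        using X a unfolding F_def by simp
    qed
    show "Fi ` {(p::int,q::int,r::int). odd p \<and> odd q \<and> odd r \<and> p^2+15*q^2+5*r^2 = 2*n+9}
      \<subseteq> {(u::int,v::int,w::int). odd u \<and> odd v \<and> odd w \<and> 1*u^2+15*v^2+20*w^2 = 8*n+1+15+20}"
    proof
      fix c assume "c \<in> Fi ` {(p::int,q::int,r::int). odd p \<and> odd q \<and> odd r \<and> p^2+15*q^2+5*r^2 = 2*n+9}"
      then obtain p q r where b: "c = Fi (p,q,r)" "odd p" "odd q" "odd r" "p^2+15*q^2+5*r^2 = 2*n+9" by auto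
      have X: "odd (fst (rhoi p q)) \<and> odd (snd (rhoi p q)) \<and> (fst (rhoi p q))^2+15*(snd (rhoi p q))^2 = 4*(p^2+15*q^2)"
        using rhoi_norm[OF b(2,3)] by blast
      then have "1*(fst (rhoi p q))^2 + 15*(snd (rhoi p q))^2 + 20*r^2 = 8*n+1+15+20" using b(5) by (simp add: distrib_left)
      then show "c \<in> {(u::int,v::int,w::int). odd u \<and> odd v \<and> odd w \<and> 1*u^2+15*v^2+20*w^2 = 8*n+1+15+20}"
        using X b unfolding Fi_def by simp
    qed
  qed
qed

lemma c3_two: fixes n k :: int assumes k: "n = 4*k+2"
  shows "card {(p::int,q::int,r::int). odd p \<and> odd q \<and> odd r \<and> p^2+15*q^2+5*r^2 = 2*n+9}
       = 2 * card {(x::int, y::int, z::int). 2*n+9 = 1 * x^2 + 15 * y^2 + 20 * z^2}"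
proof -
  define S where "S = {(p::int,q::int,r::int). odd p \<and> odd q \<and> odd r \<and> p^2+15*q^2+5*r^2 = 2*n+9}"
  define M where "M = {(x::int, y::int, z::int). 2*n+9 = 1 * x^2 + 15 * y^2 + 20 * z^2}"
  define f where "f = (\<lambda>(p::int,q::int,r::int). (p, 2 * snd (sig r q), fst (sig r q)))"
  define G1 where "G1 = (\<lambda>(x::int,y::int,z::int). (x, snd (g1 z (y div 2)), fst (g1 z (y div 2))))"
  define G2 where "G2 = (\<lambda>(x::int,y::int,z::int). (x, snd (g2 z (y div 2)), fst (g2 z (y div 2))))"
  have "card S = 2 * card M"
  proof (rule two_to_one[where f=f and ?p1.0=G1 and ?p2.0=G2])
    fix a assume a: "a \<in> S"
    then obtain p q r where a': "a = (p,q,r)" and o: "odd p" "odd q" "odd r"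
      and e: "p^2+15*q^2+5*r^2 = 2*n+9" unfolding S_def by auto
    define c where "c = fst (sig r q)" define d where "d = snd (sig r q)"
    have T: "odd (c+d)" "r^2+3*q^2 = 4*(c^2+3*d^2)" "(r,q) = g1 c d \<or> (r,q) = g2 c d"
      using sig_ok[OF o(3,2)] unfolding c_def d_def by auto
    have fa: "f a = (p, 2*d, c)" unfolding a' f_def c_def d_def by simp
    have "2*n+9 = 1 * p^2 + 15 * (2*d)^2 + 20 * c^2" using e T(2) by (simp add: power_mult_distrib)
    then have "f a \<in> M" unfolding fa M_def by simp
    moreover have "G1 (f a) = (p, snd (g1 c d), fst (g1 c d))" "G2 (f a) = (p, snd (g2 c d), fst (g2 c d))"
      unfolding fa G1_def G2_def by simp_all
    then have "a = G1 (f a) \<or> a = G2 (f a)" using T(3) unfolding a'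
      by (auto simp: prod_eq_iff)
    ultimately show "f a \<in> M \<and> (a = G1 (f a) \<or> a = G2 (f a))" by blast
  next
    fix b assume b: "b \<in> M"
    then obtain x y z where b': "b = (x,y,z)" and e: "2*n+9 = x^2 + 15 * y^2 + 20 * z^2"
      unfolding M_def by auto
    have "(x^2 + 15 * y^2 + 20 * z^2) mod 8 = 5" unfolding e[symmetric] k by presburger
    then have F: "odd x \<and> even y \<and> odd (z + y div 2)" by (rule M3_facts)
    define y' where "y' = y div 2"
    have yy: "y = 2*y'" using F unfolding y'_def by simp
    have H: "odd (fst (g1 z y')) \<and> odd (snd (g1 z y')) \<and> odd (fst (g2 z y')) \<and> odd (snd (g2 z y'))
    \<and> sig (fst (g1 z y')) (snd (g1 z y')) = (z,y') \<and> sig (fst (g2 z y')) (snd (g2 z y')) = (z,y')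
    \<and> g1 z y' \<noteq> g2 z y'"
      using g_ok F unfolding y'_def by blast
    have NN: "(fst (g1 z y'))^2 + 3*(snd (g1 z y'))^2 = 4*(z^2+3*y'^2) \<and> (fst (g2 z y'))^2 + 3*(snd (g2 z y'))^2 = 4*(z^2+3*y'^2)"
      using g_norm F unfolding y'_def by blast
    have e2: "x^2 + 60*y'^2 + 20*z^2 = 2*n+9" using e unfolding yy by (simp add: power_mult_distrib)
    have g: "G1 b = (x, snd (g1 z y'), fst (g1 z y'))" "G2 b = (x, snd (g2 z y'), fst (g2 z y'))"
      unfolding G1_def G2_def b' y'_def by simp_all
    have n1: "x^2 + 15*(snd (g1 z y'))^2 + 5*(fst (g1 z y'))^2 = 2*n+9" using NN e2 by (simp add: distrib_left)
    have n2: "x^2 + 15*(snd (g2 z y'))^2 + 5*(fst (g2 z y'))^2 = 2*n+9" using NN e2 by (simp add: distrib_left)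
    have "G1 b \<in> S" unfolding g S_def using H F n1 by simp
    moreover have "G2 b \<in> S" unfolding g S_def using H F n2 by simp
    moreover have "f (G1 b) = b" "f (G2 b) = b" unfolding g f_def using b' H yy by simp_all
    moreover have "G1 b \<noteq> G2 b" unfolding g using H by (auto simp: prod_eq_iff)
    ultimately show "G1 b \<in> S \<and> G2 b \<in> S \<and> f (G1 b) = b \<and> f (G2 b) = b \<and> G1 b \<noteq> G2 b" by blast
  qed
  then show ?thesis unfolding S_def M_def .
qed

lemma case3: fixes n :: int assumes "n mod 4 = 2"
  shows "t 1 15 20 n = 2 * N 1 15 20 (2 * n + 9)"
proof -
  obtain k where k: "n = 4*k+2" using assms by (metis mult.commute mod_div_decomp add.commute)
  have tO: "t 1 15 20 n = card {(u::int,v::int,w::int). odd u \<and> odd v \<and> odd w \<and> 1*u^2+15*v^2+20*w^2 = 8*n+1+15+20}"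
    by (rule t_odd)
  have NM: "N 1 15 20 (2 * n + 9) = card {(x::int, y::int, z::int). 2*n+9 = 1 * x^2 + 15 * y^2 + 20 * z^2}"
    unfolding N_def by simp
  show ?thesis unfolding tO NM c3_bij[OF k] c3_two[OF k] ..
qed



lemma M4_facts: fixes x y z :: int assumes "(3*x^2+4*y^2+45*z^2) mod 8 = 1"
  shows "even x \<and> odd z \<and> odd (y + x div 2)"
proof -
  define a where "a = x mod 4" define b where "b = y mod 4" define c where "c = z mod 4"
  have m: "(3*a^2+4*b^2+45*c^2) mod 8 = 1" using form8[of 3 x 4 y 45 z] assms unfolding a_def b_def c_def by simp
  have e: "even x \<longleftrightarrow> even a" "odd z \<longleftrightarrow> odd c" "odd (y + x div 2) \<longleftrightarrow> odd (b + a div 2)"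
    unfolding a_def b_def c_def by presburger+
  have "a = 0 \<or> a = 1 \<or> a = 2 \<or> a = 3" "b = 0 \<or> b = 1 \<or> b = 2 \<or> b = 3" "c = 0 \<or> c = 1 \<or> c = 2 \<or> c = 3"
    unfolding a_def b_def c_def by (auto intro!: mod4_cases)
  then show ?thesis unfolding e using m by (elim disjE; simp)
qed

lemma c4_bij: fixes n k :: int assumes k: "n = 4*k+2"
  shows "card {(u::int,v::int,w::int). odd u \<and> odd v \<and> odd w \<and> 3*u^2+4*v^2+45*w^2 = 8*n+3+4+45}
       = card {(p::int,q::int,r::int). odd p \<and> odd q \<and> odd r \<and> 3*p^2+q^2+45*r^2 = 2*n+13}"
proof (rule bij_betw_same_card)
  define F where "F = (\<lambda>(u::int,v::int,w::int). (fst (rho u w), v, snd (rho u w)))"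
  define Fi where "Fi = (\<lambda>(p::int,q::int,r::int). (fst (rhoi p r), q, snd (rhoi p r)))"
  show "bij_betw F {(u::int,v::int,w::int). odd u \<and> odd v \<and> odd w \<and> 3*u^2+4*v^2+45*w^2 = 8*n+3+4+45}
       {(p::int,q::int,r::int). odd p \<and> odd q \<and> odd r \<and> 3*p^2+q^2+45*r^2 = 2*n+13}"
  proof (rule bij_betw_byWitness[where f'=Fi])
    have A: "odd (fst (rho u w)) \<and> odd (snd (rho u w)) \<and> u^2+15*w^2 = 4*((fst (rho u w))^2 + 15*(snd (rho u w))^2)
     \<and> rhoi (fst (rho u w)) (snd (rho u w)) = (u,w)"
      if h: "odd u" "odd v" "odd w" "3*u^2+4*v^2+45*w^2 = 8*n+3+4+45" for u v w
    proof -
      obtain j where j: "v^2 = 8*j+1" using odd_sq[OF h(2)] by blast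
      have "3*(u^2+15*w^2) = 32*(k-j+2)" using h(4) j k by (simp add: right_diff_distrib distrib_left; linarith)
      then have "u^2+15*w^2 = 32*(11*(k-j+2) - (u^2+15*w^2))+0" by (simp add: right_diff_distrib distrib_left; linarith)
      then have m: "(u^2+15*w^2) mod 32 = 0" by (rule modh3) simp_all
      show ?thesis using rho_ok[OF h(1,3) m] .
    qed
    show "\<forall>a\<in>{(u::int,v::int,w::int). odd u \<and> odd v \<and> odd w \<and> 3*u^2+4*v^2+45*w^2 = 8*n+3+4+45}. Fi (F a) = a"
    proof
      fix a assume "a \<in> {(u::int,v::int,w::int). odd u \<and> odd v \<and> odd w \<and> 3*u^2+4*v^2+45*w^2 = 8*n+3+4+45}"
      then obtain u v w where a: "a = (u,v,w)" "odd u" "odd v" "odd w" "3*u^2+4*v^2+45*w^2 = 8*n+3+4+45" by auto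
      show "Fi (F a) = a" using A[OF a(2-5)] unfolding a(1) F_def Fi_def by simp
    qed
    show "\<forall>b\<in>{(p::int,q::int,r::int). odd p \<and> odd q \<and> odd r \<and> 3*p^2+q^2+45*r^2 = 2*n+13}. F (Fi b) = b"
    proof
      fix b assume "b \<in> {(p::int,q::int,r::int). odd p \<and> odd q \<and> odd r \<and> 3*p^2+q^2+45*r^2 = 2*n+13}"
      then obtain p q r where b: "b = (p,q,r)" "odd p" "odd q" "odd r" by auto
      show "F (Fi b) = b" using rhoi_norm[OF b(2,4)] unfolding b(1) F_def Fi_def by simp
    qed
    show "F ` {(u::int,v::int,w::int). odd u \<and> odd v \<and> odd w \<and> 3*u^2+4*v^2+45*w^2 = 8*n+3+4+45}
       \<subseteq> {(p::int,q::int,r::int). odd p \<and> odd q \<and> odd r \<and> 3*p^2+q^2+45*r^2 = 2*n+13}"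
    proof
      fix c assume "c \<in> F ` {(u::int,v::int,w::int). odd u \<and> odd v \<and> odd w \<and> 3*u^2+4*v^2+45*w^2 = 8*n+3+4+45}"
      then obtain u v w where a: "c = F (u,v,w)" "odd u" "odd v" "odd w" "3*u^2+4*v^2+45*w^2 = 8*n+3+4+45" by auto
      have X: "odd (fst (rho u w)) \<and> odd (snd (rho u w)) \<and> u^2+15*w^2 = 4*((fst (rho u w))^2 + 15*(snd (rho u w))^2)"
        using A[OF a(2-5)] by blast
      then have "3*(fst (rho u w))^2 + v^2 + 45*(snd (rho u w))^2 = 2*n+13" using a(5) by (simp add: distrib_left)
      then show "c \<in> {(p::int,q::int,r::int). odd p \<and> odd q \<and> odd r \<and> 3*p^2+q^2+45*r^2 = 2*n+13}"
        using X a unfolding F_def by simp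
    qed
    show "Fi ` {(p::int,q::int,r::int). odd p \<and> odd q \<and> odd r \<and> 3*p^2+q^2+45*r^2 = 2*n+13}
      \<subseteq> {(u::int,v::int,w::int). odd u \<and> odd v \<and> odd w \<and> 3*u^2+4*v^2+45*w^2 = 8*n+3+4+45}"
    proof
      fix c assume "c \<in> Fi ` {(p::int,q::int,r::int). odd p \<and> odd q \<and> odd r \<and> 3*p^2+q^2+45*r^2 = 2*n+13}"
      then obtain p q r where b: "c = Fi (p,q,r)" "odd p" "odd q" "odd r" "3*p^2+q^2+45*r^2 = 2*n+13" by auto
      have X: "odd (fst (rhoi p r)) \<and> odd (snd (rhoi p r)) \<and> (fst (rhoi p r))^2+15*(snd (rhoi p r))^2 = 4*(p^2+15*r^2)"
        using rhoi_norm[OF b(2,4)] by blast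
      then have "3*(fst (rhoi p r))^2 + 4*q^2 + 45*(snd (rhoi p r))^2 = 8*n+3+4+45" using b(5) by (simp add: distrib_left)
      then show "c \<in> {(u::int,v::int,w::int). odd u \<and> odd v \<and> odd w \<and> 3*u^2+4*v^2+45*w^2 = 8*n+3+4+45}"
        using X b unfolding Fi_def by simp
    qed
  qed
qed

lemma c4_two: fixes n k :: int assumes k: "n = 4*k+2"
  shows "card {(p::int,q::int,r::int). odd p \<and> odd q \<and> odd r \<and> 3*p^2+q^2+45*r^2 = 2*n+13}
       = 2 * card {(x::int, y::int, z::int). 2*n+13 = 3 * x^2 + 4 * y^2 + 45 * z^2}"
proof -
  define S where "S = {(p::int,q::int,r::int). odd p \<and> odd q \<and> odd r \<and> 3*p^2+q^2+45*r^2 = 2*n+13}"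
  define M where "M = {(x::int, y::int, z::int). 2*n+13 = 3 * x^2 + 4 * y^2 + 45 * z^2}"
  define f where "f = (\<lambda>(p::int,q::int,r::int). (2 * snd (sig q p), fst (sig q p), r))"
  define G1 where "G1 = (\<lambda>(x::int,y::int,z::int). (snd (g1 y (x div 2)), fst (g1 y (x div 2)), z))"
  define G2 where "G2 = (\<lambda>(x::int,y::int,z::int). (snd (g2 y (x div 2)), fst (g2 y (x div 2)), z))"
  have "card S = 2 * card M"
  proof (rule two_to_one[where f=f and ?p1.0=G1 and ?p2.0=G2])
    fix a assume a: "a \<in> S"
    then obtain p q r where a': "a = (p,q,r)" and o: "odd p" "odd q" "odd r"
      and e: "3*p^2+q^2+45*r^2 = 2*n+13" unfolding S_def by auto
    define c where "c = fst (sig q p)" define d where "d = snd (sig q p)"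
    have T: "odd (c+d)" "q^2+3*p^2 = 4*(c^2+3*d^2)" "(q,p) = g1 c d \<or> (q,p) = g2 c d"
      using sig_ok[OF o(2,1)] unfolding c_def d_def by auto
    have fa: "f a = (2*d, c, r)" unfolding a' f_def c_def d_def by simp
    have "2*n+13 = 3 * (2*d)^2 + 4 * c^2 + 45 * r^2" using e T(2) by (simp add: power_mult_distrib)
    then have "f a \<in> M" unfolding fa M_def by simp
    moreover have "G1 (f a) = (snd (g1 c d), fst (g1 c d), r)" "G2 (f a) = (snd (g2 c d), fst (g2 c d), r)"
      unfolding fa G1_def G2_def by simp_all
    then have "a = G1 (f a) \<or> a = G2 (f a)" using T(3) unfolding a'
      by (auto simp: prod_eq_iff)
    ultimately show "f a \<in> M \<and> (a = G1 (f a) \<or> a = G2 (f a))" by blast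
  next
    fix b assume b: "b \<in> M"
    then obtain x y z where b': "b = (x,y,z)" and e: "2*n+13 = 3 * x^2 + 4 * y^2 + 45 * z^2"
      unfolding M_def by auto
    have "(3 * x^2 + 4 * y^2 + 45 * z^2) mod 8 = 1" unfolding e[symmetric] k by presburger
    then have F: "even x \<and> odd z \<and> odd (y + x div 2)" by (rule M4_facts)
    define x' where "x' = x div 2"
    have xx: "x = 2*x'" using F unfolding x'_def by simp
    have H: "odd (fst (g1 y x')) \<and> odd (snd (g1 y x')) \<and> odd (fst (g2 y x')) \<and> odd (snd (g2 y x'))
    \<and> sig (fst (g1 y x')) (snd (g1 y x')) = (y,x') \<and> sig (fst (g2 y x')) (snd (g2 y x')) = (y,x')
    \<and> g1 y x' \<noteq> g2 y x'"
      using g_ok F unfolding x'_def by blast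
    have NN: "(fst (g1 y x'))^2 + 3*(snd (g1 y x'))^2 = 4*(y^2+3*x'^2) \<and> (fst (g2 y x'))^2 + 3*(snd (g2 y x'))^2 = 4*(y^2+3*x'^2)"
      using g_norm F unfolding x'_def by blast
    have e2: "12*x'^2 + 4*y^2 + 45*z^2 = 2*n+13" using e unfolding xx by (simp add: power_mult_distrib)
    have g: "G1 b = (snd (g1 y x'), fst (g1 y x'), z)" "G2 b = (snd (g2 y x'), fst (g2 y x'), z)"
      unfolding G1_def G2_def b' x'_def by simp_all
    have n1: "3*(snd (g1 y x'))^2 + (fst (g1 y x'))^2 + 45*z^2 = 2*n+13" using NN e2 by (simp add: distrib_left)
    have n2: "3*(snd (g2 y x'))^2 + (fst (g2 y x'))^2 + 45*z^2 = 2*n+13" using NN e2 by (simp add: distrib_left)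
    have "G1 b \<in> S" unfolding g S_def using H F n1 by simp
    moreover have "G2 b \<in> S" unfolding g S_def using H F n2 by simp
    moreover have "f (G1 b) = b" "f (G2 b) = b" unfolding g f_def using b' H xx by simp_all
    moreover have "G1 b \<noteq> G2 b" unfolding g using H by (auto simp: prod_eq_iff)
    ultimately show "G1 b \<in> S \<and> G2 b \<in> S \<and> f (G1 b) = b \<and> f (G2 b) = b \<and> G1 b \<noteq> G2 b" by blast
  qed
  then show ?thesis unfolding S_def M_def .
qed

lemma case4: fixes n :: int assumes "n mod 4 = 2"
  shows "t 3 4 45 n = 2 * N 3 4 45 (2 * n + 13)"
proof -
  obtain k where k: "n = 4*k+2" using assms by (metis mult.commute mod_div_decomp add.commute)
  have tO: "t 3 4 45 n = card {(u::int,v::int,w::int). odd u \<and> odd v \<and> odd w \<and> 3*u^2+4*v^2+45*w^2 = 8*n+3+4+45}"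
    by (rule t_odd)
  have NM: "N 3 4 45 (2 * n + 13) = card {(x::int, y::int, z::int). 2*n+13 = 3 * x^2 + 4 * y^2 + 45 * z^2}"
    unfolding N_def by simp
  show ?thesis unfolding tO NM c4_bij[OF k] c4_two[OF k] ..
qed


theorem theorem6p2:
  fixes n :: int
  assumes "n > 0"
  shows "(n mod 4 = 0 \<longrightarrow> t 1 4 15 n = 2 * N 1 4 15 (2 * n + 5))
       \<and> (n mod 4 = 2 \<longrightarrow> t 1 12 15 n = 2 * N 1 12 15 (2 * n + 7))
       \<and> (n mod 4 = 2 \<longrightarrow> t 1 15 20 n = 2 * N 1 15 20 (2 * n + 9))
       \<and> (n mod 4 = 2 \<longrightarrow> t 3 4 45 n = 2 * N 3 4 45 (2 * n + 13))"
  by (intro conjI impI; (rule case1 case2 case3 case4; assumption))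

end
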